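(* Let $F$ be a field of characteristic not 2 or 3, $E$ an étale cubic $F$-algebra, and suppose $(Q,\beta)$ defines an $E$-twisted composition algebra structure on $C=E^2$ such that the standard basis $\{e_1,e_2\}$ is reduced, i.e. $\beta(e_1)=e_2$. Then $(Q,\beta)=\tilde\phi(v)$ for the reduced cube $v=(1,0,-Q(e_1),-N_C(e_1))$, and $\Delta_E(v)=\Delta_C(e_1)$.
   Context: Notation: $x^\#$ adjoint ($xx^\#=N_E(x)$), $x\times y=(x+y)^\#-x^\#-y^\#$. An $E$-twisted composition algebra structure on $E^2$ is $(Q,\beta)$ with $Q:E^2\to E$ nondegenerate quadratic, polar $b_Q$, $\beta$ quadratic with $\beta(av)=a^\#\beta(v)$, $Q(\beta(v))=Q(v)^\#$, $N_C(v):=b_Q(v,\beta(v))\in F$. $\Delta_C(v)=N_C(v)^2-4N_E(Q(v))$. For a cube $(a,e,f,b)\in F\oplus E\oplus E\oplus F$, $\tilde\phi(a,e,f,b)=(Q,\beta)$ with $Q(x,y)=(e^\#-af)x^2+(-ab-2ef+\mathrm{Tr}_E(ef))xy+(f^\#-be)y^2$ and $\beta(x,y)=(-ex^\#-by^\#-(fx)\times y,\ ax^\#+fy^\#+(ey)\times x)$; for a reduced cube $(1,0,f,b)$ this is $Q(x,y)=-fx^2-bxy+f^\#y^2$, $\beta(x,y)=(-by^\#-(fx)\times y,\ x^\#+fy^\#)$. $\Delta_E(a,e,f,b)=a^2b^2-2ab\mathrm{Tr}_E(ef)+\mathrm{Tr}_E(e^2f^2)+4aN_E(f)+4bN_E(e)-2\mathrm{Tr}_E(e^\#f^\#)$,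 so $\Delta_E(1,0,f,b)=b^2+4N_E(f)$. *)

theory Defs
  imports "HOL-Analysis.Analysis"
begin

text \<open>The F-algebra structure of E is given by the structure map emb : F -> E
 (a unital ring homomorphism); scalar multiplication is c.x = emb c * x.\<close>

definition is_basis3 :: "('f::field \<Rightarrow> 'e::comm_ring_1) \<Rightarrow> (3 \<Rightarrow> 'e) \<Rightarrow> bool" where
  "is_basis3 emb b \<longleftrightarrow> (\<forall>x. \<exists>!c::'f^3. x = (\<Sum>i\<in>UNIV. emb (c$i) * b i))"

definition F_algebra :: "('f::field \<Rightarrow> 'e::comm_ring_1) \<Rightarrow> bool" where
  "F_algebra emb \<longleftrightarrow> emb 1 = 1 \<and> (\<forall>a b. emb (a + b) = emb a + emb b)
     \<and> (\<forall>a b. emb (a * b) = emb a * emb b)"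

definition cubic_algebra :: "('f::field \<Rightarrow> 'e::comm_ring_1) \<Rightarrow> bool" where
  "cubic_algebra emb \<longleftrightarrow> F_algebra emb \<and> (\<exists>b. is_basis3 emb b)"

definition coords :: "('f::field \<Rightarrow> 'e::comm_ring_1) \<Rightarrow> (3 \<Rightarrow> 'e) \<Rightarrow> 'e \<Rightarrow> 'f^3" where
  "coords emb b x = (THE c. x = (\<Sum>i\<in>UNIV. emb (c$i) * b i))"

definition ebasis :: "('f::field \<Rightarrow> 'e::comm_ring_1) \<Rightarrow> (3 \<Rightarrow> 'e)" where
  "ebasis emb = (SOME b. is_basis3 emb b)"

definition lmat :: "('f::field \<Rightarrow> 'e::comm_ring_1) \<Rightarrow> 'e \<Rightarrow> 'f^3^3" where
  "lmat emb x = (\<chi> i j. coords emb (ebasis emb) (x * ebasis emb j) $ i)"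

definition N_E :: "('f::field \<Rightarrow> 'e::comm_ring_1) \<Rightarrow> 'e \<Rightarrow> 'f" where
  "N_E emb x = det (lmat emb x)"

definition Tr_E :: "('f::field \<Rightarrow> 'e::comm_ring_1) \<Rightarrow> 'e \<Rightarrow> 'f" where
  "Tr_E emb x = trace (lmat emb x)"

text \<open>Quadratic trace: sum of principal 2x2 minors, i.e. the middle coefficient
 of the characteristic polynomial  t^3 - Tr t^2 + S t - N.\<close>
definition S_E :: "('f::field \<Rightarrow> 'e::comm_ring_1) \<Rightarrow> 'e \<Rightarrow> 'f" where
  "S_E emb x = (\<Sum>(i,j)\<in>{(i,j). i < (j::3)}.
      lmat emb x $ i $ i * lmat emb x $ j $ j - lmat emb x $ i $ j * lmat emb x $ j $ i)"

text \<open>The adjoint x^# = x^2 - Tr(x) x + S(x), so that x x^# = N(x).\<close>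
definition adj :: "('f::field \<Rightarrow> 'e::comm_ring_1) \<Rightarrow> 'e \<Rightarrow> 'e" where
  "adj emb x = x * x - emb (Tr_E emb x) * x + emb (S_E emb x)"

definition cross :: "('f::field \<Rightarrow> 'e::comm_ring_1) \<Rightarrow> 'e \<Rightarrow> 'e \<Rightarrow> 'e" where
  "cross emb x y = adj emb (x + y) - adj emb x - adj emb y"

text \<open>Etale: a cubic algebra whose trace form is nondegenerate
 (equivalent to etale for finite-dimensional commutative algebras over a field).\<close>
definition etale_cubic :: "('f::field \<Rightarrow> 'e::comm_ring_1) \<Rightarrow> bool" where
  "etale_cubic emb \<longleftrightarrow> cubic_algebra emb \<and>
     (\<forall>x. (\<forall>y. Tr_E emb (x * y) = 0) \<longrightarrow> x = 0)"

definition padd :: "'e::comm_ring_1 \<times> 'e \<Rightarrow> 'e \<times> 'e \<Rightarrow> 'e \<times> 'e" where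
  "padd v w = (fst v + fst w, snd v + snd w)"

definition psc :: "'e::comm_ring_1 \<Rightarrow> 'e \<times> 'e \<Rightarrow> 'e \<times> 'e" where
  "psc a v = (a * fst v, a * snd v)"

definition bQ :: "('e::comm_ring_1 \<times> 'e \<Rightarrow> 'e) \<Rightarrow> 'e \<times> 'e \<Rightarrow> 'e \<times> 'e \<Rightarrow> 'e" where
  "bQ Q v w = Q (padd v w) - Q v - Q w"

definition polar_map :: "('e::comm_ring_1 \<times> 'e \<Rightarrow> 'e \<times> 'e) \<Rightarrow> 'e \<times> 'e \<Rightarrow> 'e \<times> 'e \<Rightarrow> 'e \<times> 'e" where
  "polar_map \<beta> v w = (fst (\<beta> (padd v w)) - fst (\<beta> v) - fst (\<beta> w),
                       snd (\<beta> (padd v w)) - snd (\<beta> v) - snd (\<beta> w))"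

text \<open>Q is a nondegenerate quadratic form over E; beta is a quadratic map over F
 (homogeneity of degree 2 over F follows from beta(av) = a^# beta(v)).\<close>
definition twisted_comp :: "('f::field \<Rightarrow> 'e::comm_ring_1) \<Rightarrow> ('e \<times> 'e \<Rightarrow> 'e)
      \<Rightarrow> ('e \<times> 'e \<Rightarrow> 'e \<times> 'e) \<Rightarrow> bool" where
  "twisted_comp emb Q \<beta> \<longleftrightarrow>
     (\<forall>a v. Q (psc a v) = a * a * Q v) \<and>
     (\<forall>u v w. bQ Q (padd u v) w = bQ Q u w + bQ Q v w) \<and>
     (\<forall>a v w. bQ Q (psc a v) w = a * bQ Q v w) \<and>
     (\<forall>v. (\<forall>w. bQ Q v w = 0) \<longrightarrow> v = (0, 0)) \<and>
     (\<forall>u v w. polar_map \<beta> (padd u v) w = padd (polar_map \<beta> u w) (polar_map \<beta> v w)) \<and>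
     (\<forall>c v w. polar_map \<beta> (psc (emb c) v) w = psc (emb c) (polar_map \<beta> v w)) \<and>
     (\<forall>a v. \<beta> (psc a v) = psc (adj emb a) (\<beta> v)) \<and>
     (\<forall>v. Q (\<beta> v) = adj emb (Q v)) \<and>
     (\<forall>v. bQ Q v (\<beta> v) \<in> range emb)"

definition N_C :: "('f::field \<Rightarrow> 'e::comm_ring_1) \<Rightarrow> ('e \<times> 'e \<Rightarrow> 'e)
      \<Rightarrow> ('e \<times> 'e \<Rightarrow> 'e \<times> 'e) \<Rightarrow> 'e \<times> 'e \<Rightarrow> 'f" where
  "N_C emb Q \<beta> v = (THE c. emb c = bQ Q v (\<beta> v))"

definition Delta_C :: "('f::field \<Rightarrow> 'e::comm_ring_1) \<Rightarrow> ('e \<times> 'e \<Rightarrow> 'e)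
      \<Rightarrow> ('e \<times> 'e \<Rightarrow> 'e \<times> 'e) \<Rightarrow> 'e \<times> 'e \<Rightarrow> 'f" where
  "Delta_C emb Q \<beta> v = (N_C emb Q \<beta> v)^2 - 4 * N_E emb (Q v)"

definition phi_Q :: "('f::field \<Rightarrow> 'e::comm_ring_1) \<Rightarrow> 'f \<times> 'e \<times> 'e \<times> 'f \<Rightarrow> 'e \<times> 'e \<Rightarrow> 'e" where
  "phi_Q emb cube v = (case cube of (a, e, f, b) \<Rightarrow> (case v of (x, y) \<Rightarrow>
      (adj emb e - emb a * f) * x^2
    + (- emb (a * b) - 2 * e * f + emb (Tr_E emb (e * f))) * x * y
    + (adj emb f - emb b * e) * y^2))"

definition phi_beta :: "('f::field \<Rightarrow> 'e::comm_ring_1) \<Rightarrow> 'f \<times> 'e \<times> 'e \<times> 'f \<Rightarrow> 'e \<times> 'e \<Rightarrow> 'e \<times> 'e" where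
  "phi_beta emb cube v = (case cube of (a, e, f, b) \<Rightarrow> (case v of (x, y) \<Rightarrow>
      (- e * adj emb x - emb b * adj emb y - cross emb (f * x) y,
       emb a * adj emb x + f * adj emb y + cross emb (e * y) x)))"

definition phi_tilde :: "('f::field \<Rightarrow> 'e::comm_ring_1) \<Rightarrow> 'f \<times> 'e \<times> 'e \<times> 'f
      \<Rightarrow> ('e \<times> 'e \<Rightarrow> 'e) \<times> ('e \<times> 'e \<Rightarrow> 'e \<times> 'e)" where
  "phi_tilde emb cube = (phi_Q emb cube, phi_beta emb cube)"

definition Delta_E :: "('f::field \<Rightarrow> 'e::comm_ring_1) \<Rightarrow> 'f \<times> 'e \<times> 'e \<times> 'f \<Rightarrow> 'f" where
  "Delta_E emb cube = (case cube of (a, e, f, b) \<Rightarrow>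
      a^2 * b^2 - 2 * a * b * Tr_E emb (e * f) + Tr_E emb (e^2 * f^2)
    + 4 * a * N_E emb f + 4 * b * N_E emb e - 2 * Tr_E emb (adj emb e * adj emb f))"

end

theory Submission
  imports Defs
begin

lemma lt3: "(1::3) < 2" "(3::3) < 1" "(3::3) < 2" "\<not> (2::3) < 1" "\<not> (1::3) < 3" "\<not> (2::3) < 3"
  by (simp_all add: less_bit1_def bit1.Rep_numeral bit1.Rep_1 )
lemma pairs3: "{(i,j). i < (j::3)} = {(1,2),(3,1),(3,2)}"
proof (rule set_eqI, clarify)
  fix i j :: 3
  show "((i,j) \<in> {(i,j). i<j}) = ((i,j) \<in> {(1,2),(3,1),(3,2)})"
    using exhaust_3[of i] exhaust_3[of j] lt3 by (elim disjE) simp_all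
qed

definition S3 :: "'a::comm_ring_1^3^3 \<Rightarrow> 'a" where
 "S3 M = M$1$1*M$2$2 - M$1$2*M$2$1 + M$3$3*M$1$1 - M$3$1*M$1$3 + M$3$3*M$2$2 - M$3$2*M$2$3"

lemma S_E_S3: "S_E emb x = S3 (lmat emb x)"
  unfolding S_E_def pairs3 S3_def by simp

lemma CH3: fixes M :: "'a::comm_ring_1^3^3"
  shows "\<forall>i j. (M**M**M)$i$j - trace M * (M**M)$i$j + S3 M * M$i$j - det M * mat 1$i$j = 0"
  unfolding forall_3
  apply (simp add: matrix_matrix_mult_def sum_3 trace_def det_3 mat_def S3_def)
  apply (simp add: algebra_simps)
  done

lemma S3_trace: fixes M :: "'a::comm_ring_1^3^3"
  shows "2 * S3 M = trace M ^ 2 - trace (M ** M)"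
  by (simp add: matrix_matrix_mult_def sum_3 trace_def S3_def power2_eq_square algebra_simps)

lemma det3_neg: fixes M :: "'a::comm_ring_1^3^3"
  shows "det (- M) = - det M"
  by (simp add: det_3)

locale Ealg =
  fixes emb :: "'f::field \<Rightarrow> 'e::comm_ring_1"
  assumes et: "etale_cubic emb"
begin

abbreviation "bb \<equiv> ebasis emb"
abbreviation "cd x \<equiv> coords emb (ebasis emb) x"

lemma hom: "emb 1 = 1" "emb (a + b) = emb a + emb b" "emb (a * b) = emb a * emb b"
  using et unfolding etale_cubic_def cubic_algebra_def F_algebra_def by auto

lemma emb0[simp]: "emb 0 = 0"
  using hom(2)[of 0 0] by simp
lemma emb1[simp]: "emb 1 = 1" by (rule hom(1))
lemma emb_add[simp]: "emb (a + b) = emb a + emb b" by (rule hom(2))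
lemma emb_mult[simp]: "emb (a * b) = emb a * emb b" by (rule hom(3))
lemma emb_uminus[simp]: "emb (- a) = - emb a"
  using hom(2)[of a "-a"] by (simp add: eq_neg_iff_add_eq_0 add.commute)
lemma emb_diff[simp]: "emb (a - b) = emb a - emb b"
  using emb_add[of a "-b"] by simp
lemma emb_numeral[simp]: "emb (numeral n) = numeral n"
  by (induction n) (simp_all only: numeral.simps emb_add emb1)
lemma emb_power[simp]: "emb (a ^ n) = emb a ^ n"
  by (induction n) simp_all
lemma emb_sum: "emb (sum f A) = (\<Sum>i\<in>A. emb (f i))"
  by (induction A rule: infinite_finite_induct) simp_all

lemma basis: "is_basis3 emb bb"
proof -
  obtain b where "is_basis3 emb b" using et unfolding etale_cubic_def cubic_algebra_def by auto
  then show ?thesis unfolding ebasis_def by (rule someI[where P="is_basis3 emb"])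
qed

lemma repr: "x = (\<Sum>i\<in>UNIV. emb (cd x $ i) * bb i)"
proof -
  have "\<exists>!c::'f^3. x = (\<Sum>i\<in>UNIV. emb (c$i) * bb i)" using basis unfolding is_basis3_def by auto
  then show ?thesis unfolding coords_def by (rule theI')
qed

lemma coords_eq: assumes "x = (\<Sum>i\<in>UNIV. emb (c $ i) * bb i)" shows "cd x = c"
proof -
  have "\<exists>!c::'f^3. x = (\<Sum>i\<in>UNIV. emb (c$i) * bb i)" using basis unfolding is_basis3_def by auto
  then show ?thesis using assms repr[of x] by auto
qed

lemma one_neq_zero: "(1::'e) \<noteq> 0"
proof
  assume h: "(1::'e) = 0"
  have all: "\<And>y::'e. y = 0" by (metis h mult_1 mult_zero_left)
  have "cd 0 = 0" by (rule coords_eq) (simp add: all)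
  moreover have "cd 0 = (\<chi> i. 1)" by (rule coords_eq) (simp add: all)
  ultimately show False by (metis vec_lambda_beta zero_index zero_neq_one)
qed

lemma emb_inj: "emb a = emb b \<longleftrightarrow> a = b"
proof
  assume "emb a = emb b"
  then have z: "emb (a - b) = 0" by simp
  show "a = b"
  proof (rule ccontr)
    assume "a \<noteq> b"
    then have "emb (inverse (a - b) * (a - b)) = 1" by simp
    then show False using z one_neq_zero by simp
  qed
qed simp

lemma emb_eq0[simp]: "emb a = 0 \<longleftrightarrow> a = 0"
  using emb_inj[of a 0] by simp

lemma coords_add: "cd (x + y) = cd x + cd y"
  apply (rule coords_eq)
  apply (subst repr[of x], subst repr[of y])
  by (simp add: sum.distrib distrib_right)

lemma coords_scale: "cd (emb c * x) = c *s cd x"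
  apply (rule coords_eq)
  apply (subst repr[of x])
  by (simp add: sum_distrib_left mult.assoc)

lemma coords_zero: "cd 0 = 0"
  by (rule coords_eq) simp

lemma coords_zero_iff: "cd x = 0 \<longleftrightarrow> x = 0"
  using repr[of x] coords_zero by auto

lemma coords_sum: "cd (\<Sum>k\<in>(UNIV::3 set). emb (f k) * z k) = (\<Sum>k\<in>UNIV. f k *s cd (z k))"
  by (simp add: sum_3 coords_add coords_scale)

lemma coords_basis: "cd (bb j) = axis j 1"
  apply (rule coords_eq)
  apply (simp add: axis_def sum_3)
  using exhaust_3[of j] by auto

end

context Ealg begin

abbreviation "LM x \<equiv> lmat emb x"

lemma lmat_entry: "LM x $ i $ j = cd (x * bb j) $ i"
  unfolding lmat_def by simp

lemma lmat_add: "LM (x + y) = LM x + LM y"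
  by (simp add: vec_eq_iff lmat_entry distrib_right coords_add)

lemma lmat_scale: "LM (emb c * x) $ i $ j = c * LM x $ i $ j"
  by (simp add: lmat_entry mult.assoc coords_scale)

lemma lmat_mult: "LM (x * y) = LM x ** LM y"
proof -
  have "\<And>j. (x * y) * bb j = (\<Sum>k\<in>UNIV. emb (cd (y * bb j) $ k) * (x * bb k))"
  proof -
    fix j
    have "(x * y) * bb j = x * (y * bb j)" by (simp add: mult.assoc)
    also have "\<dots> = x * (\<Sum>k\<in>UNIV. emb (cd (y * bb j) $ k) * bb k)"
      using repr[of "y * bb j"] by simp
    also have "\<dots> = (\<Sum>k\<in>UNIV. emb (cd (y * bb j) $ k) * (x * bb k))"
      by (simp add: sum_distrib_left ac_simps)
    finally show "(x * y) * bb j = (\<Sum>k\<in>UNIV. emb (cd (y * bb j) $ k) * (x * bb k))" .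
  qed
  then have "\<And>j. cd ((x * y) * bb j) = (\<Sum>k\<in>UNIV. cd (y * bb j) $ k *s cd (x * bb k))"
    by (simp only: coords_sum)
  then show ?thesis
    unfolding vec_eq_iff lmat_entry matrix_matrix_mult_def
    by (simp add: sum_component mult.commute)
qed

lemma lmat_one: "LM 1 = mat 1"
  by (simp add: vec_eq_iff lmat_entry coords_basis axis_def mat_def)

lemma lmat_inj: assumes "LM x = 0" shows "x = 0"
proof -
  have "\<And>j. x * bb j = 0"
    using assms unfolding vec_eq_iff lmat_entry by (metis coords_zero_iff vec_eq_iff zero_index)
  then have "x * (\<Sum>i\<in>UNIV. emb (cd 1 $ i) * bb i) = 0"
    by (simp add: sum_distrib_left mult.left_commute[of x])
  then show ?thesis using repr[of 1] by simp
qed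

abbreviation "T x \<equiv> Tr_E emb x"
abbreviation "S x \<equiv> S_E emb x"
abbreviation "N x \<equiv> N_E emb x"

lemma T_add: "T (x + y) = T x + T y"
  unfolding Tr_E_def lmat_add by (simp add: trace_def sum.distrib)

lemma T_scale: "T (emb c * x) = c * T x"
  unfolding Tr_E_def by (simp add: trace_def lmat_scale sum_distrib_left)

lemma T_one: "T 1 = 3"
  unfolding Tr_E_def lmat_one by (simp add: trace_def mat_def sum_3)

lemma S_trace: "2 * S x = (T x)^2 - T (x * x)"
  unfolding S_E_S3 Tr_E_def lmat_mult by (rule S3_trace)

lemma lmat_diff: "LM (a - b) = LM a - LM b"
  using lmat_add[of "a - b" b] by simp

lemma lmat_emb: "LM (emb c) $ i $ j = c * mat 1 $ i $ j"
  using lmat_scale[of c 1 i j] by (simp add: lmat_one)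

lemma CH: "x * x * x - emb (T x) * (x * x) + emb (S x) * x - emb (N x) = 0"
proof (rule lmat_inj)
  let ?M = "LM x"
  have c: "\<forall>i j. (?M**?M**?M)$i$j - trace ?M * (?M**?M)$i$j + S3 ?M * ?M$i$j - det ?M * mat 1$i$j = 0"
    by (rule CH3)
  have "LM (x * x * x - emb (T x) * (x * x) + emb (S x) * x - emb (N x)) $ i $ j =
     (?M**?M**?M)$i$j - trace ?M * (?M**?M)$i$j + S3 ?M * ?M$i$j - det ?M * mat 1$i$j" for i j
    unfolding lmat_diff lmat_add
    apply (simp only: vector_minus_component vector_add_component lmat_scale lmat_emb)
    apply (simp only: lmat_mult Tr_E_def S_E_S3 N_E_def)
    done
  then show "LM (x * x * x - emb (T x) * (x * x) + emb (S x) * x - emb (N x)) = 0"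
    using c by (simp add: vec_eq_iff)
qed

end

locale Ealg2 = Ealg emb for emb :: "'f::field \<Rightarrow> 'e::comm_ring_1" +
  assumes two: "(2::'f) \<noteq> 0" and three: "(3::'f) \<noteq> 0"
begin

abbreviation "tt x \<equiv> emb (T x)"
abbreviation "ss x \<equiv> emb (S x)"
abbreviation "nn x \<equiv> emb (N x)"
abbreviation "ad x \<equiv> adj emb x"
abbreviation "cr x y \<equiv> cross emb x y"

lemma twelve: "(12::'f) \<noteq> 0"
proof -
  have "(12::'f) = 2 * 2 * 3" by simp
  then show ?thesis using two three by (metis mult_eq_0_iff)
qed
lemma twentyfour: "(24::'f) \<noteq> 0"
proof -
  have "(24::'f) = 2 * 12" by simp
  then show ?thesis using two twelve by (metis mult_eq_0_iff)
qed

lemma emb_inv_cancel: assumes "(c::'f) \<noteq> 0" shows "emb (inverse c) * emb c = 1"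
  using assms by (simp flip: emb_mult)

lemma poly_coeffs:
  assumes "\<And>c. f c = A0 + emb c * A1 + emb c ^ 2 * A2 + emb c ^ 3 * A3 + emb c ^ 4 * A4"
  shows "A1 = emb (inverse 12) * (8 * (f 1 - f (-1)) - (f 2 - f (-2)))"
    and "A2 = emb (inverse 24) * (16 * (f 1 + f (-1)) - (f 2 + f (-2)) - 30 * f 0)"
proof -
  have "8 * (f 1 - f (-1)) - (f 2 - f (-2)) = 12 * A1"
    unfolding assms by (simp add: algebra_simps)
  then show "A1 = emb (inverse 12) * (8 * (f 1 - f (-1)) - (f 2 - f (-2)))"
    using emb_inv_cancel[OF twelve] by (simp add: mult.assoc[symmetric])
  have "16 * (f 1 + f (-1)) - (f 2 + f (-2)) - 30 * f 0 = 24 * A2"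
    unfolding assms by (simp add: algebra_simps)
  then show "A2 = emb (inverse 24) * (16 * (f 1 + f (-1)) - (f 2 + f (-2)) - 30 * f 0)"
    using emb_inv_cancel[OF twentyfour] by (simp add: mult.assoc[symmetric])
qed

end

context Ealg2 begin

lemma cancel2: "(2::'f) * a = 2 * b \<Longrightarrow> a = b" using two by simp

lemma T_zero[simp]: "T 0 = 0" using T_scale[of 0 0] by simp
lemma T_uminus: "T (- x) = - T x" using T_scale[of "-1" x] by simp
lemma T_diff: "T (x - y) = T x - T y" using T_add[of x "-y"] T_uminus[of y] by simp
lemma T_emb: "T (emb c) = 3 * c" using T_scale[of c 1] T_one by simp
lemma T_mult_emb: "T (x * emb c) = c * T x" by (metis mult.commute T_scale)
lemma T_num: "T (numeral k * x) = numeral k * T x"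
  using T_scale[of "numeral k" x] by simp
lemma tt_add: "tt (x + y) = tt x + tt y" by (simp add: T_add)
lemma tt_diff: "tt (x - y) = tt x - tt y" by (simp add: T_diff)

lemma S_polar: "S (x + y) = S x + S y + T x * T y - T (x * y)"
proof -
  have e: "(x + y) * (x + y) = x * x + x * y + x * y + y * y" by (simp add: algebra_simps)
  have t: "T ((x + y) * (x + y)) = T (x * x) + 2 * T (x * y) + T (y * y)"
    unfolding e T_add by (simp only: mult_2 add.assoc)
  have a: "2 * S (x + y) = (T x + T y)^2 - (T (x * x) + 2 * T (x * y) + T (y * y))"
    using S_trace[of "x+y"] by (simp only: t T_add)
  have "2 * (S x + S y + T x * T y - T (x * y)) = 2*S x + 2*S y + 2*(T x*T y - T(x*y))"
    by (simp add: algebra_simps)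
  also have "\<dots> = (T x^2 - T(x*x)) + (T y^2 - T(y*y)) + 2*(T x*T y - T(x*y))"
    by (simp only: S_trace)
  also have "\<dots> = 2 * S (x + y)" unfolding a by (simp add: power2_eq_square algebra_simps)
  finally have "2 * S (x + y) = 2 * (S x + S y + T x * T y - T (x * y))" by simp
  then show ?thesis by (rule cancel2)
qed

lemma S_scale: "S (emb c * x) = c^2 * S x"
proof -
  have e: "emb c * x * (emb c * x) = emb (c * c) * (x * x)" by (simp add: algebra_simps)
  have "2 * S (emb c * x) = 2 * (c^2 * S x)"
  proof -
    have h: "T x * T x = T (x*x) + 2 * S x" using S_trace[of x] by (simp add: power2_eq_square)
    show ?thesis unfolding S_trace e T_scale power2_eq_square
      by (simp add: h algebra_simps)
  qed
  then show ?thesis by (rule cancel2)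
qed

lemma S_zero[simp]: "S 0 = 0" using S_scale[of 0 0] by simp
lemma S_one: "S 1 = 3"
proof -
  have "2 * S 1 = 2 * 3" unfolding S_trace by (simp add: T_one power2_eq_square)
  then show ?thesis by (rule cancel2)
qed
lemma S_emb: "S (emb c) = 3 * c^2" using S_scale[of c 1] S_one by simp
lemma S_uminus: "S (- x) = S x" using S_scale[of "-1" x] by simp

lemma N_zero[simp]: "N 0 = 0"
proof -
  have "LM 0 = 0" using lmat_add[of 0 0] by simp
  then show ?thesis unfolding N_E_def by (simp add: det_3)
qed

lemma N_uminus: "N (- x) = - N x"
proof -
  have "LM (- x) = - LM x" using lmat_add[of x "-x"] lmat_add[of 0 0] by (simp add: eq_neg_iff_add_eq_0)
  then show ?thesis unfolding N_E_def by (simp add: det3_neg)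
qed

lemma adj_eq: "ad x = x * x - tt x * x + ss x"
  unfolding adj_def by simp

lemma cross_eq: "cr x y = 2 * x * y - tt x * y - tt y * x + tt x * tt y - tt (x * y)"
  unfolding cross_def adj_def S_polar T_add by (simp add: algebra_simps)

lemma adj_zero[simp]: "ad 0 = 0" by (simp add: adj_eq)
lemma adj_uminus: "ad (- x) = ad x" by (simp add: adj_eq T_uminus S_uminus)
lemma adj_scale: "ad (emb c * x) = emb c ^ 2 * ad x"
  unfolding adj_eq T_scale S_scale by (simp add: algebra_simps power2_eq_square)
lemma adj_emb: "ad (emb c) = emb c ^ 2"
  unfolding adj_eq T_emb S_emb by (simp add: algebra_simps power2_eq_square)
lemma adj_add: "ad (x + y) = ad x + ad y + cr x y"
  unfolding cross_def by simp
lemma cross_comm: "cr x y = cr y x" unfolding cross_eq by (simp add: mult.commute algebra_simps)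
lemma cross_add: "cr (x + y) z = cr x z + cr y z"
  unfolding cross_eq distrib_right T_add by (simp add: algebra_simps)
lemma cross_scale: "cr (emb c * x) z = emb c * cr x z"
  unfolding cross_eq mult.assoc T_scale by (simp add: algebra_simps)
lemma cross_uminus: "cr (- x) z = - cr x z"
  using cross_scale[of "-1" x z] by simp
lemma cross_zero[simp]: "cr 0 z = 0" by (simp add: cross_eq)
lemma cross_one: "cr x 1 = tt x - x"
  unfolding cross_eq T_one by (simp add: algebra_simps)
lemma cross_self: "cr x x = 2 * ad x"
proof -
  have "2 * ss x = tt x * tt x - tt (x * x)"
    using arg_cong[OF S_trace[of x], of emb] by (simp add: power2_eq_square)
  then show ?thesis unfolding cross_eq adj_eq by (simp add: algebra_simps)
qed

lemma CH2: "x * ad x = nn x"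
  using CH[of x] unfolding adj_eq by (simp add: algebra_simps)

end

context Ealg2 begin

lemma S_lin: "S (x + emb c * y) = S x + c^2 * S y + c * (T x * T y - T (x * y))"
proof -
  have e: "x * (emb c * y) = emb c * (x * y)" by (simp add: algebra_simps)
  show ?thesis unfolding S_polar S_scale e T_scale by (simp add: algebra_simps)
qed

definition LL :: "'e \<Rightarrow> 'e \<Rightarrow> 'e" where
  "LL x y = 3 * (x * x * y) - 2 * tt x * (x * y) - tt y * (x * x) + ss x * y + (tt x * tt y - tt (x * y)) * x"

lemma LL_eq: "LL x y = ad x * y + x * cr x y"
  unfolding LL_def adj_eq cross_eq by (simp add: algebra_simps)

lemma CH_poly: "nn (x + emb c * y) = nn x + emb c * LL x y + emb c ^ 2 * LL y x + emb c ^ 3 * nn y + emb c ^ 4 * 0"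
proof -
  have h: "\<And>z. nn z = z * z * z - tt z * (z * z) + ss z * z"
    using CH by (simp add: algebra_simps)
  have t: "tt (x + emb c * y) = tt x + emb c * tt y" by (simp add: T_add T_scale)
  have s: "ss (x + emb c * y) = ss x + emb c ^ 2 * ss y + emb c * (tt x * tt y - tt (x * y))"
    by (simp add: S_lin)
  show ?thesis unfolding h[of "x + emb c * y"] h[of x] h[of y] t s LL_def
    by (simp add: algebra_simps power2_eq_square power3_eq_cube power4_eq_xxxx)
qed

lemma LL_in_F: "\<exists>a. LL x y = emb a"
proof -
  have "LL x y = emb (inverse 12) * (8 * (nn (x + emb 1 * y) - nn (x + emb (-1) * y)) - (nn (x + emb 2 * y) - nn (x + emb (-2) * y)))"
    by (rule poly_coeffs(1)[where f = "\<lambda>c. nn (x + emb c * y)", OF CH_poly])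
  then show ?thesis by (metis emb_diff emb_mult emb_numeral)
qed


lemma LL_alt: "LL x y = emb 3 * (x * x * y) - emb (2 * T x) * (x * y) - emb (T y) * (x * x) + emb (S x) * y + emb (T x * T y - T (x * y)) * x"
  unfolding LL_def by simp

lemma cancel3: "(3::'f) * a = 3 * b \<Longrightarrow> a = b" using three by simp

lemma T_LL: "T (LL x y) = 3 * (T (x * x * y) - T x * T (x * y) + S x * T y)"
proof -
  have h: "T (x * x) = T x ^ 2 - 2 * S x" using S_trace[of x] by simp
  show ?thesis unfolding LL_alt T_add T_diff T_scale h
    by (simp add: algebra_simps power2_eq_square)
qed

lemma LCH: "ad x * y + x * cr x y = emb (T (x * x * y) - T x * T (x * y) + S x * T y)"
proof -
  obtain a where a: "LL x y = emb a" using LL_in_F by blast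
  have "T (LL x y) = 3 * a" using a T_emb by simp
  then have "a = T (x * x * y) - T x * T (x * y) + S x * T y" using T_LL by (metis cancel3)
  then show ?thesis using a LL_eq by simp
qed

end

lemma comb1: fixes l :: "'a::comm_ring_1"
  assumes "a1 = b1" "l - r = ka * (a1 - b1)" shows "l = r"
  using assms by simp
lemma comb2: fixes l :: "'a::comm_ring_1"
  assumes "a1 = b1" "a2 = b2" "l - r = ka * (a1 - b1) + kb * (a2 - b2)" shows "l = r"
  using assms by simp
lemma comb3: fixes l :: "'a::comm_ring_1"
  assumes "a1 = b1" "a2 = b2" "a3 = b3" "l - r = ka * (a1 - b1) + kb * (a2 - b2) + kc * (a3 - b3)" shows "l = r"
  using assms by simp
lemma comb4: fixes l :: "'a::comm_ring_1"
  assumes "a1 = b1" "a2 = b2" "a3 = b3" "a4 = b4"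
    "l - r = ka * (a1 - b1) + kb * (a2 - b2) + kc * (a3 - b3) + kd * (a4 - b4)" shows "l = r"
  using assms by simp
lemma comb5: fixes l :: "'a::comm_ring_1"
  assumes "a1 = b1" "a2 = b2" "a3 = b3" "a4 = b4" "a5 = b5"
    "l - r = ka * (a1 - b1) + kb * (a2 - b2) + kc * (a3 - b3) + kd * (a4 - b4) + ke * (a5 - b5)" shows "l = r"
  using assms by simp

context Ealg2 begin

lemma T_adj: "T (ad x) = S x"
proof -
  have h: "T (x * x) = T x ^ 2 - 2 * S x" using S_trace[of x] by simp
  have "ad x = x * x - emb (T x) * x + emb (S x) * 1" by (simp add: adj_eq)
  then show ?thesis by (simp only: T_add T_diff T_scale h T_one) (simp add: algebra_simps power2_eq_square)
qed

lemma Ja: "(tt x - x) * (tt q - q) - cr q x = tt (q * x) - q * x"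
  unfolding cross_eq by (simp add: algebra_simps mult.commute)

lemma PLCH: "cr q x * y + q * cr x y + x * cr q y =
   emb (2 * T (q * x * y) - T q * T (x * y) - T x * T (q * y) + (T q * T x - T (q * x)) * T y)"
proof -
  have l1: "ad (q + x) * y + (q + x) * cr (q + x) y = emb (T ((q + x) * (q + x) * y) - T (q + x) * T ((q + x) * y) + S (q + x) * T y)"
    by (rule LCH)
  have e1: "(q + x) * (q + x) * y = q * q * y + x * x * y + (q * x * y + q * x * y)" by (simp add: algebra_simps)
  have e2: "(q + x) * y = q * y + x * y" by (simp add: algebra_simps)
  have l1': "ad q * y + ad x * y + cr q x * y + (q * cr q y + q * cr x y + x * cr q y + x * cr x y) =
     emb (T (q * q * y) + T (x * x * y) + (T (q * x * y) + T (q * x * y)) - (T q + T x) * (T (q * y) + T (x * y)) + (S q + S x + T q * T x - T (q * x)) * T y)"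
    using l1 unfolding e1 e2 T_add S_polar adj_add cross_add cross_comm[of "q+x" y] cross_comm[of y q] cross_comm[of y x]
    by (simp add: algebra_simps)
  have l2: "ad q * y + q * cr q y = emb (T (q * q * y) - T q * T (q * y) + S q * T y)" by (rule LCH)
  have l3: "ad x * y + x * cr x y = emb (T (x * x * y) - T x * T (x * y) + S x * T y)" by (rule LCH)
  show ?thesis
    by (rule comb3[where ka=1 and kb="-1" and kc="-1", OF l1' l2 l3]) (simp add: algebra_simps)
qed

end

context Ealg2 begin

lemma Jbeta: "(tt x - x) * cr q y - cr q (x * y) = cr (q * x) y"
proof -
  have p: "cr q x * y + q * cr x y + x * cr q y =
   emb (2 * T (q * x * y) - T q * T (x * y) - T x * T (q * y) + (T q * T x - T (q * x)) * T y)"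
    by (rule PLCH)
  show ?thesis
    by (rule comb1[where ka="-1", OF p]) (simp add: cross_eq algebra_simps)
qed

lemma T_q_adq: "T (q * ad q) = 3 * N q" using CH2[of q] T_emb by simp

lemma Jm: "q * (tt q - q)^2 - 2 * nn q = cr q (ad q)"
proof -
  have c: "cr q (ad q) = 2 * q * ad q - tt q * ad q - ss q * q + tt q * ss q - 3 * nn q"
    unfolding cross_eq T_adj T_q_adq by simp
  have h1: "ad q = q * q - tt q * q + ss q" by (rule adj_eq)
  have h2: "q * ad q = nn q" by (rule CH2)
  show ?thesis unfolding c
    by (rule comb2[where ka="tt q - q" and kb="-1", OF h1 h2]) (simp add: algebra_simps power2_eq_square)
qed

lemma T_q_adx: "T (q * ad x) = T (x * x * q) - T x * T (x * q) + S x * T q"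
proof -
  have "q * ad x = x * x * q - emb (T x) * (x * q) + emb (S x) * q" by (simp add: adj_eq algebra_simps)
  then show ?thesis by (simp only: T_add T_diff T_scale)
qed

lemma JW: "ad q * ad x + (ss q - ad q) * x * (tt x - x) - x * q * cr q x =
   emb (T (q * q * ad x) - T q * T (q * ad x) + S q * S x)"
proof -
  have l2: "ad q * ad x + q * cr q (ad x) = emb (T (q * q * ad x) - T q * T (q * ad x) + S q * S x)"
    using LCH[of q "ad x"] unfolding T_adj .
  have l2': "ad q * ad x + q * (2 * q * ad x - tt q * ad x - ss x * q + tt q * ss x - tt (q * ad x))
     = emb (T (q * q * ad x) - T q * T (q * ad x) + S q * S x)"
    using l2 unfolding cross_eq T_adj .
  have l1: "ad x * q + x * cr x q = emb (T (x * x * q) - T x * T (x * q) + S x * T q)"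
    by (rule LCH)
  have l1': "ad x * q + x * cr x q = tt (q * ad x)"
    unfolding l1 T_q_adx ..
  have h1: "ad q = q * q - tt q * q + ss q" by (rule adj_eq)
  have h2: "ad x = x * x - tt x * x + ss x" by (rule adj_eq)
  show ?thesis
    by (rule comb4[where ka=1 and kb="-q" and kc="x*x - x*tt x" and kd="q*tt q - q*q", OF l2' l1' h1 h2]) (simp add: cross_eq algebra_simps)
qed

end

context Ealg2 begin

definition basis3 :: "'e \<Rightarrow> 'e \<Rightarrow> 'e \<Rightarrow> bool" where
  "basis3 u v w \<longleftrightarrow> (\<forall>e. \<exists>a b c. e = emb a * u + emb b * v + emb c * w) \<and>
     (\<forall>a b c a' b' c'. emb a * u + emb b * v + emb c * w = emb a' * u + emb b' * v + emb c' * w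
        \<longrightarrow> a = a' \<and> b = b' \<and> c = c')"

lemma basis3_bb: "basis3 (bb 1) (bb 2) (bb 3)"
  unfolding basis3_def
proof (rule conjI; intro allI impI)
  fix e
  show "\<exists>a b c. e = emb a * bb 1 + emb b * bb 2 + emb c * bb 3"
    using repr[of e] by (auto simp: sum_3)
next
  fix a b c a' b' c'
  assume h: "emb a * bb 1 + emb b * bb 2 + emb c * bb 3 = emb a' * bb 1 + emb b' * bb 2 + emb c' * bb 3"
  let ?v = "vector [a, b, c] :: 'f^3" and ?v' = "vector [a', b', c'] :: 'f^3"
  have "cd (emb a * bb 1 + emb b * bb 2 + emb c * bb 3) = ?v"
    by (rule coords_eq) (simp add: sum_3 vector_def)
  moreover have "cd (emb a' * bb 1 + emb b' * bb 2 + emb c' * bb 3) = ?v'"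
    by (rule coords_eq) (simp add: sum_3 vector_def)
  ultimately have "?v = ?v'" using h by simp
  then show "a = a' \<and> b = b' \<and> c = c'"
    by (metis vector_3)
qed

lemma basis3_swap12: assumes "basis3 u v w" shows "basis3 v u w"
  unfolding basis3_def
proof (rule conjI; intro allI impI)
  fix e obtain a b c where "e = emb a * u + emb b * v + emb c * w" using assms unfolding basis3_def by blast
  then have "e = emb b * v + emb a * u + emb c * w" by (simp add: ac_simps)
  then show "\<exists>a b c. e = emb a * v + emb b * u + emb c * w" by blast
next
  fix a b c a' b' c'
  assume "emb a * v + emb b * u + emb c * w = emb a' * v + emb b' * u + emb c' * w"
  then have "emb b * u + emb a * v + emb c * w = emb b' * u + emb a' * v + emb c' * w" by (simp add: ac_simps)
  then show "a = a' \<and> b = b' \<and> c = c'" using assms unfolding basis3_def by blast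
qed

lemma basis3_swap13: assumes "basis3 u v w" shows "basis3 w v u"
  unfolding basis3_def
proof (rule conjI; intro allI impI)
  fix e obtain a b c where "e = emb a * u + emb b * v + emb c * w" using assms unfolding basis3_def by blast
  then have "e = emb c * w + emb b * v + emb a * u" by (simp add: ac_simps)
  then show "\<exists>a b c. e = emb a * w + emb b * v + emb c * u" by blast
next
  fix a b c a' b' c'
  assume "emb a * w + emb b * v + emb c * u = emb a' * w + emb b' * v + emb c' * u"
  then have "emb c * u + emb b * v + emb a * w = emb c' * u + emb b' * v + emb a' * w" by (simp add: ac_simps)
  then show "a = a' \<and> b = b' \<and> c = c'" using assms unfolding basis3_def by blast
qed

lemma basis3_exch:
  assumes b: "basis3 u v w" and one: "1 = emb a * u + emb b * v + emb c * w" and a: "a \<noteq> 0"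
  shows "basis3 1 v w"
  unfolding basis3_def
proof (rule conjI; intro allI impI)
  have u: "u = emb (inverse a) * 1 - emb (inverse a * b) * v - emb (inverse a * c) * w"
  proof -
    have "emb a * u = 1 - emb b * v - emb c * w" using one by (simp add: algebra_simps)
    then have "emb (inverse a) * (emb a * u) = emb (inverse a) * (1 - emb b * v - emb c * w)" by simp
    moreover have "emb (inverse a) * (emb a * u) = u"
      using emb_inv_cancel[OF a] by (simp add: mult.assoc[symmetric])
    ultimately show ?thesis by (simp add: algebra_simps)
  qed
  fix e
  obtain p q r where e: "e = emb p * u + emb q * v + emb r * w" using b unfolding basis3_def by blast
  show "\<exists>a b c. e = emb a * 1 + emb b * v + emb c * w"
    apply (rule exI[of _ "p * inverse a"], rule exI[of _ "q - p * inverse a * b"], rule exI[of _ "r - p * inverse a * c"])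
    unfolding e by (subst u) (simp add: algebra_simps)
next
  fix p q r p' q' r'
  assume h: "emb p * 1 + emb q * v + emb r * w = emb p' * 1 + emb q' * v + emb r' * w"
  have "emb p * 1 = emb (p * a) * u + emb (p * b) * v + emb (p * c) * w"
    by (subst one) (simp add: algebra_simps)
  moreover have "emb p' * 1 = emb (p' * a) * u + emb (p' * b) * v + emb (p' * c) * w"
    by (subst one) (simp add: algebra_simps)
  ultimately have "emb (p * a) * u + emb (p * b + q) * v + emb (p * c + r) * w =
     emb (p' * a) * u + emb (p' * b + q') * v + emb (p' * c + r') * w"
    using h by (simp add: algebra_simps)
  then have "p * a = p' * a \<and> p * b + q = p' * b + q' \<and> p * c + r = p' * c + r'"
    using b unfolding basis3_def by blast
  then show "p = p' \<and> q = q' \<and> r = r'" using a by auto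
qed

lemma exists_basis1: "\<exists>x y. basis3 1 x y"
proof -
  obtain a b c where one: "1 = emb a * bb 1 + emb b * bb 2 + emb c * bb 3"
    using basis3_bb unfolding basis3_def by blast
  have "a \<noteq> 0 \<or> b \<noteq> 0 \<or> c \<noteq> 0"
  proof (rule ccontr)
    assume "\<not> ?thesis" then have "(1::'e) = 0" using one by simp
    then show False using one_neq_zero by simp
  qed
  then show ?thesis
  proof (elim disjE)
    assume "a \<noteq> 0" then show ?thesis using basis3_exch[OF basis3_bb one] by blast
  next
    assume "b \<noteq> 0"
    moreover have "1 = emb b * bb 2 + emb a * bb 1 + emb c * bb 3" using one by (simp add: algebra_simps)
    ultimately show ?thesis using basis3_exch[OF basis3_swap12[OF basis3_bb]] by blast
  next
    assume "c \<noteq> 0"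
    moreover have "1 = emb c * bb 3 + emb b * bb 2 + emb a * bb 1" using one by (simp add: algebra_simps)
    moreover have "basis3 (bb 3) (bb 2) (bb 1)"
      using basis3_bb by (rule basis3_swap13)
    ultimately show ?thesis using basis3_exch by blast
  qed
qed

end

context Ealg2 begin

lemma coef_eq: assumes "basis3 1 x y" "emb a + emb b * x + emb c * y = emb a' + emb b' * x + emb c' * y"
  shows "a = a' \<and> b = b' \<and> c = c'"
  using assms unfolding basis3_def by (metis mult.right_neutral)

lemma etale_T: "(\<forall>y. T (x * y) = 0) \<Longrightarrow> x = 0"
  using et unfolding etale_cubic_def by blast

lemma half: "emb (inverse 2) * 2 = (1::'e)"
  using emb_inv_cancel[OF two] by simp

lemma G: "\<exists>y. \<forall>a b. y * y \<noteq> emb a + emb b * y"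
proof (rule ccontr)
  assume "\<not> ?thesis"
  then have H: "\<And>y. \<exists>a b. y * y = emb a + emb b * y" by blast
  obtain x y where B: "basis3 1 x y" using exists_basis1 by blast
  obtain a1 b1 where h1: "x * x = emb a1 + emb b1 * x" using H by blast
  obtain a2 b2 where h2: "y * y = emb a2 + emb b2 * y" using H by blast
  obtain a3 b3 where h3: "(x + y) * (x + y) = emb a3 + emb b3 * (x + y)" using H by blast
  obtain a4 b4 where h4: "(x - y) * (x - y) = emb a4 + emb b4 * (x - y)" using H by blast
  have "(x + y) * (x + y) + (x - y) * (x - y) = 2 * (x * x) + 2 * (y * y)" by (simp add: algebra_simps)
  then have "emb (a3 + a4) + emb (b3 + b4) * x + emb (b3 - b4) * y = emb (2 * a1 + 2 * a2) + emb (2 * b1) * x + emb (2 * b2) * y"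
    unfolding h1 h2 h3 h4 by (simp add: algebra_simps)
  from coef_eq[OF B this] have c1: "b3 + b4 = 2 * b1" "b3 - b4 = 2 * b2" by simp_all
  define h where "h = inverse (2::'f)"
  have h2': "2 * h = 1" unfolding h_def using two by simp
  have eh: "emb h * 2 = 1" using half unfolding h_def .
  have "4 * (x * y) = (x + y) * (x + y) - (x - y) * (x - y)" by (simp add: algebra_simps)
  also have "\<dots> = emb (a3 - a4) + emb (b3 - b4) * x + emb (b3 + b4) * y" unfolding h3 h4 by (simp add: algebra_simps)
  finally have xy4: "4 * (x * y) = emb (a3 - a4) + emb (2 * b2) * x + emb (2 * b1) * y" using c1 by simp
  have xy: "x * y = emb (h * h * (a3 - a4)) + emb (h * b2) * x + emb (h * b1) * y"
  proof -
    have "h * h * 4 = (2 * h) * (2 * h)" by simp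
    then have f4: "h * h * 4 = 1" unfolding h2' by simp
    have "h * h * 2 = h * (2 * h)" by simp
    then have f2: "h * h * 2 = h" unfolding h2' by simp
    have "x * y = emb (h * h * 4) * (x * y)" unfolding f4 by simp
    also have "\<dots> = emb (h * h) * (4 * (x * y))" by (simp only: emb_mult emb_numeral mult.assoc)
    also have "\<dots> = emb (h * h) * (emb (a3 - a4) + emb (2 * b2) * x + emb (2 * b1) * y)" unfolding xy4 ..
    also have "\<dots> = emb (h * h * (a3 - a4)) + emb (h * h * 2 * b2) * x + emb (h * h * 2 * b1) * y"
      by (simp only: emb_mult distrib_left mult.assoc)
    finally show ?thesis unfolding f2 .
  qed
  have xx: "(x - emb (h * b1)) * (x - emb (h * b1)) = emb (a1 + h * h * b1 * b1)"
  proof -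
    have "(x - emb (h * b1)) * (x - emb (h * b1)) = x * x - emb (2 * h) * emb b1 * x + emb (h * h * b1 * b1)"
      by (simp add: algebra_simps)
    then show ?thesis unfolding h1 h2' by simp
  qed
  have yy: "(y - emb (h * b2)) * (y - emb (h * b2)) = emb (a2 + h * h * b2 * b2)"
  proof -
    have "(y - emb (h * b2)) * (y - emb (h * b2)) = y * y - emb (2 * h) * emb b2 * y + emb (h * h * b2 * b2)"
      by (simp add: algebra_simps)
    then show ?thesis unfolding h2 h2' by simp
  qed
  define x0 where "x0 = x - emb (h * b1)"
  define y0 where "y0 = y - emb (h * b2)"
  define e where "e = h * h * (a3 - a4) + h * h * b1 * b2"
  define A where "A = a1 + h * h * b1 * b1"
  have x0y0: "x0 * y0 = emb e"
  proof -
    have "x0 * y0 = x * y - emb (h * b2) * x - emb (h * b1) * y + emb (h * h * b1 * b2)"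
      unfolding x0_def y0_def by (simp add: algebra_simps)
    then show ?thesis unfolding xy e_def by (simp add: algebra_simps)
  qed
  have x0x0: "x0 * x0 = emb A" unfolding x0_def A_def by (rule xx)
  have "x0 * (x0 * y0) = (x0 * x0) * y0" by (simp add: mult.assoc)
  then have "emb e * x0 = emb A * y0" unfolding x0y0 x0x0 by (simp add: mult.commute)
  then have "emb (- e * h * b1 + A * h * b2) + emb e * x + emb (- A) * y = emb 0 + emb 0 * x + emb 0 * y"
    unfolding x0_def y0_def by (simp add: algebra_simps)
  from coef_eq[OF B this] have eA: "e = 0" "A = 0" by simp_all
  have sq0: "x0 * x0 = 0" using x0x0 eA by simp
  have xy0: "x0 * y0 = 0" using x0y0 eA by simp
  have "emb (S x0) * x0 = emb (N x0)" using CH[of x0] sq0 by (simp add: algebra_simps)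
  then have "emb (- S x0 * h * b1 - N x0) + emb (S x0) * x + emb 0 * y = emb 0 + emb 0 * x + emb 0 * y"
    unfolding x0_def by (simp add: algebra_simps)
  from coef_eq[OF B this] have S0: "S x0 = 0" by simp
  have "T x0 ^ 2 = 0" using S_trace[of x0] S0 sq0 by simp
  then have T0: "T x0 = 0" by simp
  have "\<forall>z. T (x0 * z) = 0"
  proof
    fix z
    obtain p q r where z: "z = emb p * 1 + emb q * x + emb r * y" using B unfolding basis3_def by blast
    have "z = emb (p + q * h * b1 + r * h * b2) + emb q * x0 + emb r * y0"
      unfolding z x0_def y0_def by (simp add: algebra_simps)
    then have "x0 * z = emb (p + q * h * b1 + r * h * b2) * x0 + emb q * (x0 * x0) + emb r * (x0 * y0)"
      by (simp add: algebra_simps)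
    then have "x0 * z = emb (p + q * h * b1 + r * h * b2) * x0" using sq0 xy0 by simp
    then show "T (x0 * z) = 0" using T0 by (simp only: T_scale) simp
  qed
  then have "x0 = 0" by (rule etale_T)
  then have "emb 0 + emb 1 * x + emb 0 * y = emb (h * b1) + emb 0 * x + emb 0 * y"
    unfolding x0_def by simp
  from coef_eq[OF B this] show False by simp
qed

end

context Ealg2 begin

lemma notF: "\<exists>y. \<forall>c. y \<noteq> emb c"
proof -
  obtain y where y: "\<forall>a b. y * y \<noteq> emb a + emb b * y" using G by blast
  have "\<forall>c. y \<noteq> emb c"
  proof
    fix c show "y \<noteq> emb c"
    proof
      assume "y = emb c"
      then have "y * y = emb 0 + emb c * y" by simp
      then show False using y by blast
    qed
  qed
  then show ?thesis by blast
qed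

lemma R1: assumes "\<And>x. \<exists>c. emb a * x = emb c" shows "a = 0"
proof (rule ccontr)
  assume a: "a \<noteq> 0"
  obtain y where y: "\<forall>c. y \<noteq> emb c" using notF by blast
  obtain c where c: "emb a * y = emb c" using assms by blast
  have "emb (inverse a) * (emb a * y) = y" using emb_inv_cancel[OF a] by (simp add: mult.assoc[symmetric])
  then have "y = emb (inverse a * c)" using c by simp
  then show False using y by blast
qed

lemma R2:
  assumes gF: "\<And>x. \<exists>c. g x = emb c"
    and gadd: "\<And>x y. g (x + y) = g x + g y"
    and H: "\<And>x. \<exists>c. g 1 * (tt x * x - x * x) - g x * x = emb c"
  shows "g x = 0"
proof -
  obtain r1 where r1: "g 1 = emb r1" using gF by blast
  have "r1 = 0"
  proof (rule ccontr)
    assume r: "r1 \<noteq> 0"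
    obtain y where y: "\<forall>a b. y * y \<noteq> emb a + emb b * y" using G by blast
    obtain gy where gy: "g y = emb gy" using gF by blast
    obtain c where c: "g 1 * (tt y * y - y * y) - g y * y = emb c" using H by blast
    have "emb r1 * (y * y) = emb (- c) + emb (r1 * T y - gy) * y" using c r1 gy by (simp add: algebra_simps)
    then have "emb (inverse r1) * (emb r1 * (y * y)) = emb (inverse r1) * (emb (- c) + emb (r1 * T y - gy) * y)" by simp
    moreover have "emb (inverse r1) * (emb r1 * (y * y)) = y * y" using emb_inv_cancel[OF r] by (simp add: mult.assoc[symmetric])
    ultimately have "y * y = emb (inverse r1 * - c) + emb (inverse r1 * (r1 * T y - gy)) * y"
      by (simp add: algebra_simps)
    then show False using y by blast
  qed
  then have H2: "\<And>x. \<exists>c. g x * x = emb c" using H r1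
    by (metis add.inverse_inverse emb0 emb_uminus minus_diff_eq mult_zero_left diff_zero)
  have nf: "g x = 0" if x: "\<forall>c. x \<noteq> emb c" for x
  proof -
    obtain gx where gx: "g x = emb gx" using gF by blast
    obtain d where d: "g x * x = emb d" using H2 by blast
    show ?thesis
    proof (rule ccontr)
      assume "g x \<noteq> 0"
      then have gx0: "gx \<noteq> 0" using gx by simp
      have "emb (inverse gx) * (emb gx * x) = x" using emb_inv_cancel[OF gx0] by (simp add: mult.assoc[symmetric])
      then have "x = emb (inverse gx * d)" using d gx by simp
      then show False using x by blast
    qed
  qed
  show "g x = 0"
  proof (cases "\<exists>c. x = emb c")
    case False then show ?thesis using nf by blast
  next
    case True
    then obtain c where xc: "x = emb c" by blast
    obtain y where y: "\<forall>c. y \<noteq> emb c" using notF by blast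
    have "\<forall>d. x + y \<noteq> emb d"
    proof
      fix d show "x + y \<noteq> emb d"
      proof
        assume "x + y = emb d" then have "y = emb (d - c)" using xc by (simp add: algebra_simps)
        then show False using y by blast
      qed
    qed
    then have "g (x + y) = 0" using nf by blast
    moreover have "g y = 0" using nf y by blast
    ultimately show ?thesis using gadd[of x y] by simp
  qed
qed

end

locale TC = Ealg2 emb for emb :: "'f::field \<Rightarrow> 'e::comm_ring_1" +
  fixes Q :: "'e \<times> 'e \<Rightarrow> 'e" and \<beta> :: "'e \<times> 'e \<Rightarrow> 'e \<times> 'e"
  assumes tc: "twisted_comp emb Q \<beta>" and be1: "\<beta> (1, 0) = (0, 1)"
begin

lemmas tcp = tc[unfolded twisted_comp_def]

abbreviation "B \<equiv> bQ Q"
abbreviation "P \<equiv> polar_map \<beta>"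

lemma Qh: "Q (psc a v) = a * a * Q v" using tcp[THEN conjunct1] by blast
lemma B_add1: "B (padd u v) w = B u w + B v w" using tcp[THEN conjunct2, THEN conjunct1] by blast
lemma B_sc1: "B (psc a v) w = a * B v w" using tcp[THEN conjunct2, THEN conjunct2, THEN conjunct1] by blast
lemma nondeg: "(\<And>w. B v w = 0) \<Longrightarrow> v = (0, 0)" using tcp[THEN conjunct2, THEN conjunct2, THEN conjunct2, THEN conjunct1] by blast
lemma P_add1: "P (padd u v) w = padd (P u w) (P v w)" using tcp[THEN conjunct2, THEN conjunct2, THEN conjunct2, THEN conjunct2, THEN conjunct1] by blast
lemma P_sc1: "P (psc (emb c) v) w = psc (emb c) (P v w)" using tcp[THEN conjunct2, THEN conjunct2, THEN conjunct2, THEN conjunct2, THEN conjunct2, THEN conjunct1] by blast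
lemma beta_sc: "\<beta> (psc a v) = psc (ad a) (\<beta> v)" using tcp[THEN conjunct2, THEN conjunct2, THEN conjunct2, THEN conjunct2, THEN conjunct2, THEN conjunct2, THEN conjunct1] by blast
lemma Q_beta: "Q (\<beta> v) = ad (Q v)" using tcp[THEN conjunct2, THEN conjunct2, THEN conjunct2, THEN conjunct2, THEN conjunct2, THEN conjunct2, THEN conjunct2, THEN conjunct1] by blast
lemma N_in: "\<exists>c. B v (\<beta> v) = emb c" using tcp[THEN conjunct2, THEN conjunct2, THEN conjunct2, THEN conjunct2, THEN conjunct2, THEN conjunct2, THEN conjunct2, THEN conjunct2] by blast

lemma padd_comm: "padd u v = padd v u" unfolding padd_def by (simp add: add.commute)
lemma B_sym: "B u w = B w u" unfolding bQ_def by (simp add: padd_comm)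
lemma P_sym: "P u w = P w u" unfolding polar_map_def by (simp add: padd_comm)

lemma Q_add: "Q (padd u w) = Q u + Q w + B u w" unfolding bQ_def by simp

definition q where "q = Q (1, 0)"
definition n where "n = B (1, 0) (0, 1)"

lemma n_F: "\<exists>c. n = emb c" unfolding n_def using N_in[of "(1,0)"] be1 by simp

lemma Q_e2: "Q (0, 1) = ad q" unfolding q_def using Q_beta[of "(1,0)"] be1 by simp

lemma pair_decomp: "(x, y) = padd (psc x (1, 0)) (psc y (0, 1))"
  unfolding padd_def psc_def by simp

lemma Qf: "Q (x, y) = q * x * x + n * x * y + ad q * y * y"
proof -
  have "B (psc x (1, 0)) (psc y (0, 1)) = x * y * n"
    unfolding B_sc1 n_def by (subst B_sym) (simp add: B_sc1 mult.assoc B_sym[of "(0,1)" "(1,0)"])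
  then show ?thesis unfolding pair_decomp[of x y] Q_add Qh q_def[symmetric] Q_e2
    by (simp add: algebra_simps)
qed

definition Bf :: "'e \<times> 'e \<Rightarrow> 'e \<times> 'e \<Rightarrow> 'e" where
  "Bf v w = 2 * q * fst v * fst w + n * (fst v * snd w + snd v * fst w) + 2 * ad q * snd v * snd w"

lemma Bf_eq: "B v w = Bf v w"
  unfolding bQ_def padd_def Bf_def using Qf
  by (cases v, cases w) (simp add: algebra_simps)

end

context TC begin

lemma B_add2: "B w (padd u v) = B w u + B w v" using B_add1 B_sym by metis
lemma B_sc2: "B w (psc a v) = a * B w v" using B_sc1 B_sym by metis
lemma psc_psc: "psc a (psc b v) = psc (a * b) v" unfolding psc_def by (simp add: mult.assoc)
lemma psc_one[simp]: "psc 1 v = v" unfolding psc_def by simp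

lemma Q_poly: "Q (padd (padd X (psc (e^2) Z)) (psc e Y)) = Q X + e * B X Y + e^2 * (Q Y + B X Z) + e^3 * B Y Z + e^4 * Q Z"
  unfolding Q_add Qh B_add1 B_add2 B_sc1 B_sc2
  by (simp add: algebra_simps power2_eq_square power3_eq_cube power4_eq_xxxx B_sym[of Z Y])

lemma Q_lin: "Q (padd u (psc e w)) = Q u + e * B u w + e^2 * Q w"
  unfolding Q_add Qh B_sc2 by (simp add: algebra_simps power2_eq_square)

lemma B_poly: "B (padd u (psc e w)) (padd (padd X (psc (e^2) Z)) (psc e Y)) =
   B u X + e * (B u Y + B w X) + e^2 * (B u Z + B w Y) + e^3 * B w Z"
  unfolding B_add1 B_add2 B_sc1 B_sc2
  by (simp add: algebra_simps power2_eq_square power3_eq_cube)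

lemma adj_poly: "ad (X + emb c * Y + emb c ^ 2 * Z) = ad X + emb c * cr X Y + emb c ^ 2 * (ad Y + cr X Z) + emb c ^ 3 * cr Y Z + emb c ^ 4 * ad Z"
proof -
  have e2: "emb c ^ 2 = emb (c^2)" by simp
  have cs2: "cr a (emb d * b) = emb d * cr a b" for a b d
    using cross_scale[of d b a] cross_comm by metis
  have "ad (X + emb c * Y + emb c ^ 2 * Z) = ad X + ad (emb c * Y) + cr X (emb c * Y) + ad (emb (c^2) * Z)
     + cr X (emb (c^2) * Z) + cr (emb c * Y) (emb (c^2) * Z)"
    unfolding adj_add cross_add e2 by (simp add: algebra_simps)
  also have "\<dots> = ad X + emb c ^ 2 * ad Y + emb c * cr X Y + emb (c^2) ^ 2 * ad Z + emb (c^2) * cr X Z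
     + emb c * (emb (c^2) * cr Y Z)"
    by (simp only: adj_scale cs2 cross_scale mult.left_commute[of "emb (c^2)" "emb c"])
  finally show ?thesis by (simp add: algebra_simps power2_eq_square power3_eq_cube power4_eq_xxxx)
qed

lemma beta_add: "\<beta> (padd u w) = padd (padd (\<beta> u) (\<beta> w)) (P u w)"
  unfolding polar_map_def padd_def by simp

lemma beta_fam: "\<beta> (padd u (psc (emb c) w)) = padd (padd (\<beta> u) (psc (emb c ^ 2) (\<beta> w))) (psc (emb c) (P u w))"
proof -
  have "P u (psc (emb c) w) = psc (emb c) (P u w)"
    using P_sc1[of c w u] P_sym[of u "psc (emb c) w"] P_sym[of w u] by simp
  then show ?thesis unfolding beta_add beta_sc adj_emb by simp
qed

end

context TC begin

lemma Qcond_poly: "Q (\<beta> (padd u (psc (emb c) w))) - ad (Q (padd u (psc (emb c) w))) =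
  (Q (\<beta> u) - ad (Q u)) + emb c * (B (\<beta> u) (P u w) - cr (Q u) (B u w))
  + emb c ^ 2 * (Q (P u w) + B (\<beta> u) (\<beta> w) - ad (B u w) - cr (Q u) (Q w))
  + emb c ^ 3 * (B (P u w) (\<beta> w) - cr (B u w) (Q w)) + emb c ^ 4 * (Q (\<beta> w) - ad (Q w))"
  unfolding beta_fam Q_poly unfolding Q_lin adj_poly by (simp add: algebra_simps)

lemma L1: "B (\<beta> u) (P u w) = cr (Q u) (B u w)"
proof -
  let ?f = "\<lambda>c. Q (\<beta> (padd u (psc (emb c) w))) - ad (Q (padd u (psc (emb c) w)))"
  have f0: "\<And>c. ?f c = 0" by (simp add: Q_beta)
  have "B (\<beta> u) (P u w) - cr (Q u) (B u w) = emb (inverse 12) * (8 * (?f 1 - ?f (-1)) - (?f 2 - ?f (-2)))"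
    by (rule poly_coeffs(1)[where f = ?f, OF Qcond_poly])
  then show ?thesis unfolding f0 by simp
qed

lemma L2: "Q (P u w) + B (\<beta> u) (\<beta> w) = ad (B u w) + cr (Q u) (Q w)"
proof -
  let ?f = "\<lambda>c. Q (\<beta> (padd u (psc (emb c) w))) - ad (Q (padd u (psc (emb c) w)))"
  have f0: "\<And>c. ?f c = 0" by (simp add: Q_beta)
  have "Q (P u w) + B (\<beta> u) (\<beta> w) - ad (B u w) - cr (Q u) (Q w) =
     emb (inverse 24) * (16 * (?f 1 + ?f (-1)) - (?f 2 + ?f (-2)) - 30 * ?f 0)"
    by (rule poly_coeffs(2)[where f = ?f, OF Qcond_poly])
  then show ?thesis unfolding f0 by (simp add: algebra_simps)
qed

lemma Ncond_poly: "B (padd u (psc (emb c) w)) (\<beta> (padd u (psc (emb c) w))) =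
  B u (\<beta> u) + emb c * (B u (P u w) + B w (\<beta> u)) + emb c ^ 2 * (B u (\<beta> w) + B w (P u w))
  + emb c ^ 3 * B w (\<beta> w) + emb c ^ 4 * 0"
  unfolding beta_fam B_poly by simp

lemma N1: "\<exists>a. B u (P u w) + B w (\<beta> u) = emb a"
proof -
  let ?f = "\<lambda>c. B (padd u (psc (emb c) w)) (\<beta> (padd u (psc (emb c) w)))"
  have fF: "\<And>c. \<exists>a. ?f c = emb a" by (rule N_in)
  obtain a1 a2 a3 a4 where "?f 1 = emb a1" "?f (-1) = emb a2" "?f 2 = emb a3" "?f (-2) = emb a4"
    using fF by metis
  moreover have "B u (P u w) + B w (\<beta> u) = emb (inverse 12) * (8 * (?f 1 - ?f (-1)) - (?f 2 - ?f (-2)))"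
    by (rule poly_coeffs(1)[where f = ?f, OF Ncond_poly])
  ultimately have "B u (P u w) + B w (\<beta> u) = emb (inverse 12) * emb (8 * (a1 - a2) - (a3 - a4))"
    by (simp only: emb_diff emb_mult emb_numeral)
  then have "B u (P u w) + B w (\<beta> u) = emb (inverse 12 * (8 * (a1 - a2) - (a3 - a4)))"
    by (simp only: emb_mult)
  then show ?thesis by blast
qed

end

context TC begin

definition nc where "nc = N_C emb Q \<beta> (1, 0)"

lemma n_nc: "n = emb nc"
proof -
  obtain c where c: "n = emb c" using n_F by blast
  have "B (1,0) (\<beta> (1,0)) = n" unfolding n_def be1 ..
  then have "nc = c" unfolding nc_def N_C_def using c emb_inj by (simp add: the_equality)
  then show ?thesis using c by simp
qed

lemma P_add2: "P w (padd u v) = padd (P w u) (P w v)" using P_add1 P_sym by metis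

lemma P_hom: "P (psc a v) (psc a w) = psc (ad a) (P v w)"
proof -
  have h: "padd (psc a v) (psc a w) = psc a (padd v w)" unfolding padd_def psc_def by (simp add: algebra_simps)
  show ?thesis unfolding polar_map_def h beta_sc unfolding psc_def by (simp add: algebra_simps)
qed

lemma psc_add: "psc (a + b) v = padd (psc a v) (psc b v)" unfolding psc_def padd_def by (simp add: algebra_simps)

lemma Pmix: "padd (P (psc a u) (psc b w)) (P (psc b u) (psc a w)) = psc (cr a b) (P u w)"
proof -
  have H: "P (psc (a + b) u) (psc (a + b) w) = psc (ad (a + b)) (P u w)" by (rule P_hom)
  show ?thesis using H unfolding psc_add P_add1 P_add2 adj_add P_hom
    unfolding psc_def padd_def by (simp add: algebra_simps prod_eq_iff)
qed

definition K where "K z = P (1, 0) (psc z (0, 1))"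
definition C where "C a y = P (psc a (1, 0)) (psc y (0, 1))"

lemma C_rel: "C a y = (fst (psc (tt a - a) (K y)) - fst (K (a * y)), snd (psc (tt a - a) (K y)) - snd (K (a * y)))"
proof -
  have "padd (P (psc a (1, 0)) (psc 1 (psc y (0, 1)))) (P (psc 1 (1, 0)) (psc a (psc y (0, 1)))) = psc (cr a 1) (P (1, 0) (psc y (0, 1)))"
    by (rule Pmix)
  then have "padd (C a y) (K (a * y)) = psc (tt a - a) (K y)"
    unfolding C_def K_def psc_one psc_psc cross_one by (simp add: mult.commute)
  then show ?thesis unfolding padd_def by (auto simp: prod_eq_iff eq_diff_eq)
qed

lemma K_add: "K (z + z') = padd (K z) (K z')"
  unfolding K_def psc_add P_add2 ..

lemma beta_decomp: "\<beta> (x, y) = padd (padd (0, ad x) (psc (ad y) (\<beta> (0, 1)))) (C x y)"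
proof -
  have "\<beta> (psc x (1, 0)) = psc (ad x) (\<beta> (1, 0))" by (rule beta_sc)
  then have "\<beta> (psc x (1, 0)) = (0, ad x)" unfolding be1 psc_def by simp
  then show ?thesis unfolding C_def by (subst pair_decomp) (simp only: beta_add beta_sc)
qed

end

context TC begin

abbreviation "k1 z \<equiv> fst (K z)"
abbreviation "k2 z \<equiv> snd (K z)"
definition s where "s = fst (\<beta> (0, 1))"
definition t where "t = snd (\<beta> (0, 1))"

lemma e2_eq: "\<beta> (0, 1) = (s, t)" unfolding s_def t_def by simp

lemma cr_n: "cr a (n * z) = n * cr a z"
  unfolding n_nc using cross_scale[of nc z a] cross_comm by metis

lemma E1: "n * k1 z + 2 * ad q * k2 z = n * cr q z"
proof -
  have "B (\<beta> (1, 0)) (P (1, 0) (psc z (0, 1))) = cr (Q (1, 0)) (B (1, 0) (psc z (0, 1)))" by (rule L1)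
  then have "B (0, 1) (K z) = cr q (n * z)"
    unfolding be1 K_def[symmetric] q_def[symmetric] Bf_eq[of "(1,0)"] by (simp add: Bf_def psc_def mult.commute)
  then show ?thesis unfolding Bf_eq cr_n by (simp add: Bf_def)
qed

lemma E2: "\<exists>a. 2 * q * k1 z + n * k2 z + 2 * ad q * z = emb a"
proof -
  obtain a where "B (1, 0) (P (1, 0) (psc z (0, 1))) + B (psc z (0, 1)) (\<beta> (1, 0)) = emb a" using N1 by blast
  then have "2 * q * k1 z + n * k2 z + 2 * ad q * z = emb a"
    unfolding be1 K_def[symmetric] Bf_eq by (simp add: Bf_def psc_def algebra_simps)
  then show ?thesis by blast
qed

lemma C1_eq: "C x 1 = ((tt x - x) * k1 1 - k1 x, (tt x - x) * k2 1 - k2 x)"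
  using C_rel[of x 1] by (simp add: psc_def)

lemma E3: "\<exists>a. n * fst (C x 1) + 2 * ad q * snd (C x 1) + x * (2 * q * s + n * t) = emb a"
proof -
  obtain a where "B (0, 1) (P (0, 1) (psc x (1, 0))) + B (psc x (1, 0)) (\<beta> (0, 1)) = emb a" using N1 by blast
  moreover have "P (0, 1) (psc x (1, 0)) = C x 1" unfolding C_def by (simp add: P_sym)
  ultimately have "n * fst (C x 1) + 2 * ad q * snd (C x 1) + x * (2 * q * s + n * t) = emb a"
    unfolding e2_eq Bf_eq by (simp add: Bf_def psc_def algebra_simps)
  then show ?thesis by blast
qed

lemma E4: "\<exists>a. x * (2 * q * fst (C x 1) + n * snd (C x 1)) + 2 * ad q * ad x = emb a"
proof -
  obtain a where "B (psc x (1, 0)) (P (psc x (1, 0)) (0, 1)) + B (0, 1) (\<beta> (psc x (1, 0))) = emb a" using N1 by blast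
  moreover have "P (psc x (1, 0)) (0, 1) = C x 1" unfolding C_def by simp
  moreover have "\<beta> (psc x (1, 0)) = psc (ad x) (\<beta> (1, 0))" by (rule beta_sc)
  ultimately have "x * (2 * q * fst (C x 1) + n * snd (C x 1)) + 2 * ad q * ad x = emb a"
    unfolding be1 Bf_eq by (simp add: Bf_def psc_def algebra_simps)
  then show ?thesis by blast
qed

lemma E5: "Q (K 1) + n * s + 2 * ad q * t = ad n + cr q (ad q)"
proof -
  have "Q (P (1, 0) (0, 1)) + B (\<beta> (1, 0)) (\<beta> (0, 1)) = ad (B (1, 0) (0, 1)) + cr (Q (1, 0)) (Q (0, 1))" by (rule L2)
  moreover have "P (1, 0) (0, 1) = K 1" unfolding K_def by simp
  ultimately show ?thesis unfolding be1 e2_eq n_def[symmetric] q_def[symmetric] Q_e2 Bf_eq by (simp add: Bf_def add.assoc)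
qed

end

context TC begin

lemma q_adq: "q * ad q = nn q" by (rule CH2)

lemma Dnz: "4 * N q - nc ^ 2 \<noteq> 0"
proof
  assume D: "4 * N q - nc ^ 2 = 0"
  have D': "4 * (q * ad q) = n * n" unfolding q_adq n_nc using arg_cong[OF D, of emb]
    by (simp add: power2_eq_square algebra_simps)
  have "(2 * ad q, - n) = (0, 0)"
  proof (rule nondeg)
    fix w show "B (2 * ad q, - n) w = 0"
      unfolding Bf_eq Bf_def using D' by (simp add: algebra_simps)
  qed
  then have n0: "n = 0" by simp
  have "(n, - 2 * q) = (0, 0)"
  proof (rule nondeg)
    fix w show "B (n, - 2 * q) w = 0"
      unfolding Bf_eq Bf_def using D' n0 by (simp add: algebra_simps)
  qed
  then have q0: "2 * q = 0" by simp
  have "((1::'e), (0::'e)) = (0, 0)"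
  proof (rule nondeg)
    fix w show "B (1, 0) w = 0"
      unfolding Bf_eq Bf_def using q0 n0 by (simp add: algebra_simps)
  qed
  then show False using one_neq_zero by simp
qed

lemma Dunit: "emb (inverse (4 * N q - nc ^ 2)) * (4 * (q * ad q) - n * n) = 1"
proof -
  have "4 * (q * ad q) - n * n = emb (4 * N q - nc ^ 2)" unfolding q_adq n_nc by (simp add: power2_eq_square)
  then show ?thesis using emb_inv_cancel[OF Dnz] by simp
qed

lemma solve2:
  assumes h1: "2 * q * a + n * b = 0" and h2: "n * a + 2 * ad q * b = 0"
  shows "a = 0 \<and> b = 0"
proof -
  have "(4 * (q * ad q) - n * n) * a = 2 * ad q * (2 * q * a + n * b) - n * (n * a + 2 * ad q * b)"
    by (simp add: algebra_simps)
  then have ha: "(4 * (q * ad q) - n * n) * a = 0" using h1 h2 by simp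
  have "(4 * (q * ad q) - n * n) * b = 2 * q * (n * a + 2 * ad q * b) - n * (2 * q * a + n * b)"
    by (simp add: algebra_simps)
  then have hb: "(4 * (q * ad q) - n * n) * b = 0" using h1 h2 by simp
  have "a = emb (inverse (4 * N q - nc ^ 2)) * ((4 * (q * ad q) - n * n) * a)"
    using Dunit by (simp add: mult.assoc[symmetric])
  moreover have "b = emb (inverse (4 * N q - nc ^ 2)) * ((4 * (q * ad q) - n * n) * b)"
    using Dunit by (simp add: mult.assoc[symmetric])
  ultimately show ?thesis using ha hb by simp
qed

end

context TC begin

definition g where "g z = 2 * q * (k1 z - cr q z) + n * k2 z"

lemma gF: "\<exists>c. g z = emb c"
proof -
  obtain a where a: "2 * q * k1 z + n * k2 z + 2 * ad q * z = emb a" using E2 by blast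
  have b: "ad q * z + q * cr q z = emb (T (q * q * z) - T q * T (q * z) + S q * T z)" by (rule LCH)
  have "g z = emb (a - 2 * (T (q * q * z) - T q * T (q * z) + S q * T z))"
    unfolding g_def by (rule comb2[where ka=1 and kb="-2", OF a b]) (simp add: algebra_simps)
  then show ?thesis by blast
qed

lemma cr_add2: "cr a (x + y) = cr a x + cr a y" using cross_add cross_comm by metis

lemma gadd: "g (x + y) = g x + g y"
  unfolding g_def K_add cr_add2 by (simp add: padd_def algebra_simps)

lemma gH: "\<exists>c. g 1 * (tt x * x - x * x) - g x * x = emb c"
proof -
  obtain a where a: "x * (2 * q * fst (C x 1) + n * snd (C x 1)) + 2 * ad q * ad x = emb a" using E4 by blast
  then have a': "x * (2 * q * ((tt x - x) * k1 1 - k1 x) + n * ((tt x - x) * k2 1 - k2 x)) + 2 * ad q * ad x = emb a"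
    unfolding C1_eq by simp
  have w: "ad q * ad x + (ss q - ad q) * x * (tt x - x) - x * q * cr q x =
   emb (T (q * q * ad x) - T q * T (q * ad x) + S q * S x)" by (rule JW)
  have c1: "cr q 1 = tt q - q" by (rule cross_one)
  have h: "ad q = q * q - tt q * q + ss q" by (rule adj_eq)
  have "g 1 * (tt x * x - x * x) - g x * x = emb (a - 2 * (T (q * q * ad x) - T q * T (q * ad x) + S q * S x))"
    unfolding g_def
    by (rule comb4[where ka=1 and kb="-2" and kc="-2 * x * (tt x - x) * q" and kd="-2 * x * (tt x - x)", OF a' w c1 h])
      (simp add: algebra_simps)
  then show ?thesis by blast
qed

lemma g0: "g z = 0"
  by (rule R2[of g]) (rule gF, rule gadd, rule gH)

lemma K_sol: "K z = (cr q z, 0)"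
proof -
  have h1: "2 * q * (k1 z - cr q z) + n * k2 z = 0" using g0 unfolding g_def .
  have h2: "n * (k1 z - cr q z) + 2 * ad q * k2 z = 0" using E1[of z] by (simp add: algebra_simps)
  from solve2[OF h1 h2] show ?thesis by (simp add: prod_eq_iff)
qed

end

context TC begin

lemma C1_sol: "C x 1 = ((tt x - x) * cr q 1 - cr q x, 0)"
  unfolding C1_eq K_sol by simp

lemma alpha0: "2 * q * s + n * t = n * q"
proof -
  have F: "\<exists>c. (2 * q * s + n * t - n * q) * x = emb c" for x
  proof -
    obtain a where a: "n * fst (C x 1) + 2 * ad q * snd (C x 1) + x * (2 * q * s + n * t) = emb a" using E3 by blast
    then have a': "n * ((tt x - x) * cr q 1 - cr q x) + x * (2 * q * s + n * t) = emb a"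
      unfolding C1_sol by simp
    have j: "(tt x - x) * (tt q - q) - cr q x = tt (q * x) - q * x" by (rule Ja)
    have c1: "cr q 1 = tt q - q" by (rule cross_one)
    have "(2 * q * s + n * t - n * q) * x = emb (a - nc * T (q * x))"
      by (rule comb3[where ka=1 and kb="-n" and kc="- n * (tt x - x)", OF a' j c1]) (simp add: n_nc algebra_simps)
    then show ?thesis by blast
  qed
  obtain a0 where a0: "2 * q * s + n * t - n * q = emb a0" using F[of 1] by auto
  have "a0 = 0" by (rule R1) (use F a0 in \<open>auto simp: mult.commute\<close>)
  then show ?thesis using a0 by simp
qed

lemma E5': "n * s + 2 * ad q * t = n * n - 2 * nn q"
proof -
  have e5: "Q (K 1) + n * s + 2 * ad q * t = ad n + cr q (ad q)" by (rule E5)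
  have qk: "Q (K 1) = q * (tt q - q) * (tt q - q)" unfolding K_sol Qf cross_one by simp
  have an: "ad n = n * n" unfolding n_nc adj_emb by (simp add: power2_eq_square)
  have jm: "q * (tt q - q)^2 - 2 * nn q = cr q (ad q)" by (rule Jm)
  show ?thesis
    by (rule comb2[where ka=1 and kb="-1", OF e5 jm]) (simp add: qk an algebra_simps power2_eq_square)
qed

lemma st_sol: "s = n \<and> t = - q"
proof -
  have h1: "2 * q * (s - n) + n * (t + q) = 0" using alpha0 by (simp add: algebra_simps)
  have h2: "n * (s - n) + 2 * ad q * (t + q) = 0" using E5' q_adq by (simp add: algebra_simps)
  from solve2[OF h1 h2] show ?thesis by (simp add: eq_neg_iff_add_eq_0)
qed

end

context TC begin

lemma beta_final: "\<beta> (x, y) = (n * ad y + cr (q * x) y, ad x - q * ad y)"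
proof -
  have c: "C x y = (cr (q * x) y, 0)"
    using C_rel[of x y] unfolding K_sol Jbeta[symmetric] by (simp add: psc_def)
  show ?thesis unfolding beta_decomp[of x y] c e2_eq st_sol[THEN conjunct1] st_sol[THEN conjunct2]
    by (simp add: padd_def psc_def algebra_simps)
qed

lemma main:
  "(Q, \<beta>) = phi_tilde emb (1, 0, - Q (1, 0), - N_C emb Q \<beta> (1, 0))
    \<and> Delta_E emb (1, 0, - Q (1, 0), - N_C emb Q \<beta> (1, 0)) = Delta_C emb Q \<beta> (1, 0)"
proof -
  have qd: "Q (1, 0) = q" unfolding q_def ..
  have nd: "N_C emb Q \<beta> (1, 0) = nc" unfolding nc_def ..
  have hQ: "Q = phi_Q emb (1, 0, - q, - nc)"
  proof
    fix v :: "'e \<times> 'e"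
    obtain x y where v: "v = (x, y)" by (cases v)
    show "Q v = phi_Q emb (1, 0, - q, - nc) v"
      unfolding v Qf phi_Q_def using adj_uminus[of q]
      by (simp add: n_nc power2_eq_square algebra_simps)
  qed
  have hB: "\<beta> = phi_beta emb (1, 0, - q, - nc)"
  proof
    fix v :: "'e \<times> 'e"
    obtain x y where v: "v = (x, y)" by (cases v)
    have "cr (- q * x) y = - cr (q * x) y" using cross_uminus[of "q * x" y] by simp
    then show "\<beta> v = phi_beta emb (1, 0, - q, - nc) v"
      unfolding v beta_final phi_beta_def by (simp add: n_nc algebra_simps)
  qed
  have hD: "Delta_E emb (1, 0, - q, - nc) = Delta_C emb Q \<beta> (1, 0)"
    unfolding Delta_E_def Delta_C_def nd qd using N_uminus[of q] by simp
  show ?thesis unfolding qd nd phi_tilde_def using hQ hB hD by simp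
qed

end

theorem proposition10p2:
  fixes emb :: "'f::field \<Rightarrow> 'e::comm_ring_1"
    and Q :: "'e \<times> 'e \<Rightarrow> 'e"
    and \<beta> :: "'e \<times> 'e \<Rightarrow> 'e \<times> 'e"
  assumes "(2::'f) \<noteq> 0" and "(3::'f) \<noteq> 0"
    and "etale_cubic emb"
    and "twisted_comp emb Q \<beta>"
    and "\<beta> (1, 0) = (0, 1)"
  shows "(Q, \<beta>) = phi_tilde emb (1, 0, - Q (1, 0), - N_C emb Q \<beta> (1, 0))
    \<and> Delta_E emb (1, 0, - Q (1, 0), - N_C emb Q \<beta> (1, 0)) = Delta_C emb Q \<beta> (1, 0)"
proof -
  interpret TC emb Q \<beta>
    by (unfold_locales) (use assms in auto)
  show ?thesis by (rule main)
qed


end
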